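(* Let $R$ be a tolerance relation on $\{1,\ldots,n\}$ and $A=A(R)$. Let $\mathcal{D}(A)$ be the set of $\rho\in A$ with $\rho\succeq 0$ and $\mathrm{Tr}(\rho)=1$. Then the map $\mathcal{D}(A)\to\mathcal{S}(A)$, $\rho\mapsto\varphi_\rho$, where $\varphi_\rho(a)=\mathrm{Tr}(\rho^*a)$ for $a\in A$, is a bijection; moreover it is a homeomorphism when $\mathcal{D}(A)$ carries the norm topology and $\mathcal{S}(A)$ the weak-$*$ topology.
   Context: A tolerance relation on a set is a reflexive and symmetric relation. $T:M_n(\mathbb{C})\to M_n(\mathbb{C})$ is $T(b)=\sum_{(i,j)\in R}E_{ii}bE_{jj}$, and $A(R)=T(M_n(\mathbb{C}))$ (matrices vanishing at positions outside $R$). For $a\in A$, $a\succeq 0$ means $a=T(b)$ for some positive semidefinite $b\in M_n(\mathbb{C})$. $\mathcal{S}(A)$ is the set of states of the operator system $A$: linear functionals $\varphi:A\to\mathbb{C}$ with $\varphi(a)\ge0$ for every positive semidefinite $a\in A$ and $\varphi(1)=1$. *)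

theory Defs
  imports "HOL-Analysis.Analysis"
begin

text \<open>n x n complex matrices, indexed by a finite type 'n (standing for {1..n}).\<close>

definition tolerance :: "('n \<times> 'n) set \<Rightarrow> bool" where
  "tolerance R \<longleftrightarrow> refl R \<and> sym R"

definition mtrace :: "complex^'n^'n \<Rightarrow> complex" where
  "mtrace a = (\<Sum>i\<in>UNIV. a $ i $ i)"

definition adjoint_mat :: "complex^'n^'n \<Rightarrow> complex^'n^'n" where
  "adjoint_mat a = (\<chi> i j. cnj (a $ j $ i))"

definition psd :: "complex^'n^'n \<Rightarrow> bool" where
  "psd b \<longleftrightarrow> (\<forall>x::complex^'n.
     (\<Sum>i\<in>UNIV. \<Sum>j\<in>UNIV. cnj (x $ i) * b $ i $ j * x $ j) \<in> \<real> \<and>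
     Re (\<Sum>i\<in>UNIV. \<Sum>j\<in>UNIV. cnj (x $ i) * b $ i $ j * x $ j) \<ge> 0)"

text \<open>T(b) = sum over (i,j) in R of E_ii b E_jj.\<close>
definition Tmap :: "('n \<times> 'n) set \<Rightarrow> complex^'n^'n \<Rightarrow> complex^'n^'n" where
  "Tmap R b = (\<chi> i j. if (i, j) \<in> R then b $ i $ j else 0)"

definition opsys :: "('n \<times> 'n) set \<Rightarrow> (complex^'n^'n) set" where
  "opsys R = range (Tmap R)"

definition Rpos :: "('n \<times> 'n) set \<Rightarrow> complex^'n^'n \<Rightarrow> bool" where
  "Rpos R a \<longleftrightarrow> (\<exists>b. psd b \<and> a = Tmap R b)"

definition density_set :: "('n \<times> 'n) set \<Rightarrow> (complex^'n^'n) set" where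
  "density_set R = {\<rho> \<in> opsys R. Rpos R \<rho> \<and> mtrace \<rho> = 1}"

text \<open>A functional on A is represented as a total
  function which is 0 outside A (so that functionals on A correspond uniquely to such
  functions); the product (pointwise) topology on such functions is the weak-* topology.\<close>
definition states :: "('n \<times> 'n) set \<Rightarrow> (complex^'n^'n \<Rightarrow> complex) set" where
  "states R = {\<phi>.
     (\<forall>a\<in>opsys R. \<forall>b\<in>opsys R. \<phi> (a + b) = \<phi> a + \<phi> b) \<and>
     (\<forall>c::complex. \<forall>a\<in>opsys R. \<phi> ((\<chi> i j. c * a $ i $ j)) = c * \<phi> a) \<and>
     (\<forall>a\<in>opsys R. psd a \<longrightarrow> \<phi> a \<in> \<real> \<and> Re (\<phi> a) \<ge> 0) \<and>
     \<phi> (mat 1) = 1 \<and>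
     (\<forall>a. a \<notin> opsys R \<longrightarrow> \<phi> a = 0)}"

definition state_of :: "('n \<times> 'n) set \<Rightarrow> complex^'n^'n \<Rightarrow> (complex^'n^'n \<Rightarrow> complex)" where
  "state_of R \<rho> = (\<lambda>a. if a \<in> opsys R then mtrace (adjoint_mat \<rho> ** a) else 0)"

end

theory Submission
  imports Defs
begin


definition sq :: "complex^'n^'n \<Rightarrow> complex^'n \<Rightarrow> complex^'n \<Rightarrow> complex" where
  "sq b x y = (\<Sum>i\<in>UNIV. \<Sum>j\<in>UNIV. cnj (x $ i) * b $ i $ j * y $ j)"

lemma psd_sq: "psd b \<longleftrightarrow> (\<forall>x. sq b x x \<in> \<real> \<and> Re (sq b x x) \<ge> 0)"
  unfolding psd_def sq_def by simp

lemma sq_add1: "sq b (x + y) z = sq b x z + sq b y z"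
  unfolding sq_def by (simp add: algebra_simps sum.distrib)
lemma sq_add2: "sq b x (y + z) = sq b x y + sq b x z"
  unfolding sq_def by (simp add: algebra_simps sum.distrib)
lemma sq_axis1: "sq b (axis k t) z = cnj t * (\<Sum>j\<in>UNIV. b $ k $ j * z $ j)"
proof -
  have "\<And>i. (\<Sum>j\<in>UNIV. cnj (axis k t $ i) * b $ i $ j * z $ j) = (if i = k then cnj t * (\<Sum>j\<in>UNIV. b $ k $ j * z $ j) else 0)"
    by (simp add: axis_def sum_distrib_left mult.assoc)
  then show ?thesis unfolding sq_def by simp
qed
lemma sq_axis2: "sq b x (axis k t) = (\<Sum>i\<in>UNIV. cnj (x $ i) * b $ i $ k) * t"
proof -
  have "\<And>i. (\<Sum>j\<in>UNIV. cnj (x $ i) * b $ i $ j * axis k t $ j) = cnj (x $ i) * b $ i $ k * t"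
  proof -
    fix i
    have "\<And>j. cnj (x $ i) * b $ i $ j * axis k t $ j = (if j = k then cnj (x $ i) * b $ i $ k * t else 0)"
      by (simp add: axis_def)
    then show "(\<Sum>j\<in>UNIV. cnj (x $ i) * b $ i $ j * axis k t $ j) = cnj (x $ i) * b $ i $ k * t" by simp
  qed
  then show ?thesis unfolding sq_def by (simp add: sum_distrib_right)
qed
lemma sq_axis_axis: "sq b (axis i s) (axis j t) = cnj s * b $ i $ j * t"
proof -
  have "\<And>n. b $ i $ n * axis j t $ n = (if n = j then b $ i $ j * t else 0)"
    by (simp add: axis_def)
  then have "(\<Sum>n\<in>UNIV. b $ i $ n * axis j t $ n) = b $ i $ j * t" by simp
  then show ?thesis by (simp add: sq_axis1 mult.assoc)
qed

lemma qf2: "sq b (axis i s + axis j t) (axis i s + axis j t) =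
   cnj s * b$i$i * s + cnj s * b$i$j * t + cnj t * b$j$i * s + cnj t * b$j$j * t"
  by (simp add: sq_add1 sq_add2 sq_axis_axis)

lemma herm2:
  assumes "\<And>s t. sq b (axis i s + axis j t) (axis i s + axis j t) \<in> \<real>"
    and "\<And>s. sq b (axis i s) (axis i s) \<in> \<real>" and "\<And>s. sq b (axis j s) (axis j s) \<in> \<real>"
  shows "b $ j $ i = cnj (b $ i $ j)"
proof -
  have d1: "Im (b$i$i) = 0" using assms(2)[of 1] by (simp add: sq_axis_axis complex_is_Real_iff)
  have d2: "Im (b$j$j) = 0" using assms(3)[of 1] by (simp add: sq_axis_axis complex_is_Real_iff)
  have e1: "Im (b$i$i + b$i$j + b$j$i + b$j$j) = 0" using assms(1)[of 1 1] by (simp add: qf2 complex_is_Real_iff)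
  have e2: "Im (b$i$i + \<i> * b$i$j - \<i> * b$j$i + b$j$j) = 0"
  proof -
    have "sq b (axis i 1 + axis j \<i>) (axis i 1 + axis j \<i>) = b$i$i + \<i> * b$i$j - \<i> * b$j$i + b$j$j"
      unfolding qf2 by (simp add: algebra_simps)
    then show ?thesis using assms(1)[of 1 \<i>] by (simp add: complex_is_Real_iff)
  qed
  show ?thesis using d1 d2 e1 e2 by (simp add: complex_eq_iff)
qed

definition hermitian :: "complex^'n^'n \<Rightarrow> bool" where
  "hermitian m \<longleftrightarrow> (\<forall>i j. m $ j $ i = cnj (m $ i $ j))"

lemma psd_diag: assumes "psd b" shows "b $ k $ k \<in> \<real>" "Re (b $ k $ k) \<ge> 0"
  using assms[unfolded psd_sq, rule_format, of "axis k 1"] by (auto simp: sq_axis_axis)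

lemma psd_herm: assumes "psd b" shows "hermitian b"
  unfolding hermitian_def
proof (intro allI)
  fix i j
  show "b $ j $ i = cnj (b $ i $ j)"
    by (rule herm2) (use assms[unfolded psd_sq] in auto)
qed

lemma cz: "cnj z * z = complex_of_real ((cmod z)^2)"
  using complex_norm_square[of z] by (simp add: mult.commute)

lemma Re_neg_scale: "Re (cnj (- (complex_of_real r) * z) * z) = - r * (cmod z)^2"
proof -
  have "cnj (- (complex_of_real r) * z) * z = - complex_of_real r * (cnj z * z)" by simp
  also have "\<dots> = complex_of_real (- r * (cmod z)^2)" by (metis cz of_real_mult of_real_minus)
  finally show ?thesis by (metis Re_complex_of_real)
qed

lemma psd_zero: assumes "psd b" "b $ k $ k = 0" shows "b $ k $ j = 0"
proof (rule ccontr)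
  assume nz: "b $ k $ j \<noteq> 0"
  have H: "b $ j $ k = cnj (b $ k $ j)" using psd_herm[OF assms(1)] unfolding hermitian_def by blast
  define z where "z = b $ k $ j"
  define r where "r = (Re (b $ j $ j) + 1) / (2 * (cmod z)^2)"
  have zpos: "cmod z > 0" using nz z_def by auto
  define s where "s = - (complex_of_real r) * z"
  have "sq b (axis k s + axis j 1) (axis k s + axis j 1) = cnj s * b$k$k * s + cnj s * b$k$j * 1 + cnj 1 * b$j$k * s + cnj 1 * b$j$j * 1"
    by (rule qf2)
  also have "\<dots> = cnj s * z + cnj (cnj s * z) + b $ j $ j"
    by (simp only: assms(2) H z_def complex_cnj_mult complex_cnj_cnj mult_zero_right mult_zero_left mult_1_right complex_cnj_one mult_1_left add_0 mult.commute)
  finally have q: "sq b (axis k s + axis j 1) (axis k s + axis j 1) = cnj s * z + cnj (cnj s * z) + b $ j $ j" .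
  have "Re (cnj s * z) = - r * (cmod z)^2" unfolding s_def by (rule Re_neg_scale)
  then have "Re (sq b (axis k s + axis j 1) (axis k s + axis j 1)) = - 2 * r * (cmod z)^2 + Re (b $ j $ j)"
    unfolding q by simp
  also have "\<dots> = -1" using zpos by (simp add: r_def field_simps)
  finally show False using assms(1)[unfolded psd_sq, rule_format, of "axis k s + axis j 1"] by simp
qed

definition ip :: "complex^'n^'n \<Rightarrow> complex^'n^'n \<Rightarrow> complex" where
  "ip x y = (\<Sum>i\<in>UNIV. \<Sum>j\<in>UNIV. cnj (x $ i $ j) * y $ i $ j)"

lemma sq_quad: "sq b (x + y) (x + y) = sq b x x + sq b x y + sq b y x + sq b y y"
  by (simp add: sq_add1 sq_add2)

lemma sq_diff: "sq (b - c) x y = sq b x y - sq c x y"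
  unfolding sq_def by (simp add: algebra_simps sum_subtractf)

lemma sqM: "sq (\<chi> i j. u $ i * cnj (u $ j) / \<beta>) x x = (\<Sum>i\<in>UNIV. cnj (x $ i) * u $ i) * cnj (\<Sum>i\<in>UNIV. cnj (x $ i) * u $ i) / \<beta>"
proof -
  have "sq (\<chi> i j. u $ i * cnj (u $ j) / \<beta>) x x = (\<Sum>i\<in>UNIV. \<Sum>j\<in>UNIV. (cnj (x $ i) * u $ i) * (x $ j * cnj (u $ j)) / \<beta>)"
    unfolding sq_def by (simp add: mult_ac)
  also have "\<dots> = (\<Sum>i\<in>UNIV. cnj (x $ i) * u $ i) * (\<Sum>j\<in>UNIV. x $ j * cnj (u $ j)) / \<beta>"
    by (simp add: sum_product sum_divide_distrib)
  finally show ?thesis by simp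
qed

lemma schur_arith:
  assumes "cnj \<beta> = \<beta>" "\<beta> \<noteq> 0"
  shows "Q - cnj q * cnj (cnj q) / \<beta> = Q + cnj q * (- q / \<beta>) + cnj (- q / \<beta>) * q + cnj (- q / \<beta>) * \<beta> * (- q / \<beta>)"
  using assms by (simp add: field_simps)

lemma schur_step:
  assumes "psd b" "b $ k $ k \<noteq> 0"
  defines "M \<equiv> (\<chi> i j. (\<chi> i. b $ i $ k) $ i * cnj ((\<chi> i. b $ i $ k) $ j) / b $ k $ k)"
  shows "psd (b - M)"
proof -
  define \<beta> where "\<beta> = b $ k $ k"
  have bR: "\<beta> \<in> \<real>" using psd_diag[OF assms(1)] \<beta>_def by auto
  then have cb: "cnj \<beta> = \<beta>" by (simp add: Reals_cnj_iff)
  have bnz: "\<beta> \<noteq> 0" using assms(2) \<beta>_def by auto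
  have H: "\<And>i j. b $ j $ i = cnj (b $ i $ j)" using psd_herm[OF assms(1)] unfolding hermitian_def by blast
  show ?thesis unfolding psd_sq
  proof
    fix x
    define q where "q = (\<Sum>j\<in>UNIV. b $ k $ j * x $ j)"
    define p where "p = (\<Sum>i\<in>UNIV. cnj (x $ i) * (\<chi> i. b $ i $ k) $ i)"
    have pq: "p = cnj q" unfolding p_def q_def by (simp add: H[of k] mult.commute)
    define t where "t = - q / \<beta>"
    have "sq (b - M) x x = sq b x x - p * cnj p / \<beta>"
      unfolding sq_diff M_def sqM p_def \<beta>_def ..
    also have "\<dots> = sq b x x + p * t + cnj t * q + cnj t * \<beta> * t"
      unfolding pq t_def by (rule schur_arith[OF cb bnz])
    also have "\<dots> = sq b (x + axis k t) (x + axis k t)"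
      unfolding sq_quad sq_axis_axis unfolding sq_axis1 sq_axis2 p_def q_def \<beta>_def by simp
    finally have "sq (b - M) x x = sq b (x + axis k t) (x + axis k t)" .
    then show "sq (b - M) x x \<in> \<real> \<and> 0 \<le> Re (sq (b - M) x x)"
      using assms(1)[unfolded psd_sq] by metis
  qed
qed

lemma ip_add1: "ip (x + y) a = ip x a + ip y a"
  unfolding ip_def by (simp add: algebra_simps sum.distrib)

lemma ipM: "ip (\<chi> i j. u $ i * cnj (u $ j) / \<beta>) a = sq a u u / cnj \<beta>"
  unfolding ip_def sq_def by (simp add: sum_divide_distrib mult_ac)

lemma pos_induct:
  assumes "finite S" "psd a"
  shows "\<forall>b. psd b \<longrightarrow> (\<forall>i j. b$i$j \<noteq> 0 \<longrightarrow> i \<in> S \<and> j \<in> S) \<longrightarrow> ip b a \<in> \<real> \<and> Re (ip b a) \<ge> 0"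
  using assms(1)
proof (induction S rule: finite_induct)
  case empty
  show ?case
  proof (intro allI impI)
    fix b :: "complex^'a^'a" assume "\<forall>i j. b$i$j \<noteq> 0 \<longrightarrow> i \<in> {} \<and> j \<in> {}"
    then have "\<And>i j. b$i$j = 0" by blast
    then show "ip b a \<in> \<real> \<and> Re (ip b a) \<ge> 0" unfolding ip_def by simp
  qed
next
  case (insert k S)
  show ?case
  proof (intro allI impI)
    fix b :: "complex^'a^'a" assume pb: "psd b" and sb: "\<forall>i j. b$i$j \<noteq> 0 \<longrightarrow> i \<in> insert k S \<and> j \<in> insert k S"
    have H: "\<And>i j. b $ j $ i = cnj (b $ i $ j)" using psd_herm[OF pb] unfolding hermitian_def by blast
    show "ip b a \<in> \<real> \<and> Re (ip b a) \<ge> 0"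
    proof (cases "b $ k $ k = 0")
      case True
      have z: "\<And>j. b $ k $ j = 0" by (rule psd_zero[OF pb True])
      have "\<forall>i j. b$i$j \<noteq> 0 \<longrightarrow> i \<in> S \<and> j \<in> S"
      proof (intro allI impI)
        fix i j assume "b$i$j \<noteq> 0"
        moreover have "b $ i $ k = 0" using H[of k i] z[of i] by simp
        ultimately show "i \<in> S \<and> j \<in> S" using sb z by (metis insertE)
      qed
      then show ?thesis using insert.IH pb by blast
    next
      case False
      define \<beta> where "\<beta> = b $ k $ k"
      define u where "u = (\<chi> i. b $ i $ k)"
      define M where "M = (\<chi> i j. u $ i * cnj (u $ j) / \<beta>)"
      have bR: "\<beta> \<in> \<real>" and bp: "Re \<beta> \<ge> 0" using psd_diag[OF pb] \<beta>_def by auto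
      have bnz: "\<beta> \<noteq> 0" using False \<beta>_def by auto
      have cb: "cnj \<beta> = \<beta>" using bR by (simp add: Reals_cnj_iff)
      have p': "psd (b - M)" unfolding M_def u_def \<beta>_def by (rule schur_step[OF pb False])
      have "\<forall>i j. (b - M)$i$j \<noteq> 0 \<longrightarrow> i \<in> S \<and> j \<in> S"
      proof (intro allI impI)
        fix i j assume nz: "(b - M)$i$j \<noteq> 0"
        have e: "(b - M)$i$j = b$i$j - b$i$k * cnj (b$j$k) / \<beta>" unfolding M_def u_def by simp
        have "i \<noteq> k"
        proof
          assume "i = k" then have "(b - M)$i$j = 0" using e bnz H[of j k] \<beta>_def by simp
          then show False using nz by simp
        qed
        moreover have "j \<noteq> k"
        proof
          assume "j = k" then have "(b - M)$i$j = 0" using e bnz cb \<beta>_def by simp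
          then show False using nz by simp
        qed
        moreover have "b$i$j \<noteq> 0 \<or> (b$i$k \<noteq> 0 \<and> b$j$k \<noteq> 0)" using nz e by auto
        ultimately show "i \<in> S \<and> j \<in> S" using sb by blast
      qed
      then have ih: "ip (b - M) a \<in> \<real> \<and> Re (ip (b - M) a) \<ge> 0" using insert.IH p' by blast
      have "ip b a = ip (b - M) a + ip M a" using ip_add1[of "b - M" M a] by simp
      moreover have "ip M a = sq a u u / \<beta>" unfolding M_def ipM cb ..
      moreover have "sq a u u / \<beta> \<in> \<real> \<and> Re (sq a u u / \<beta>) \<ge> 0"
      proof -
        obtain r where r: "\<beta> = complex_of_real r" using bR Reals_cases by blast
        obtain v where v: "sq a u u = complex_of_real v" using assms(2)[unfolded psd_sq] Reals_cases by metis
        have "v \<ge> 0" using assms(2)[unfolded psd_sq, rule_format, of u] v by simp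
        moreover have "r \<ge> 0" using bp r by simp
        ultimately show ?thesis using r v by (simp add: Re_divide)
      qed
      ultimately show ?thesis using ih by (metis Reals_add plus_complex.sel(1) add_nonneg_nonneg)
    qed
  qed
qed

lemma psd_ip: assumes "psd a" "psd b" shows "ip b a \<in> \<real> \<and> Re (ip b a) \<ge> 0"
  using pos_induct[of UNIV a] assms by simp



definition outer :: "complex^'n \<Rightarrow> complex^'n^'n" where
  "outer v = (\<chi> i j. v $ i * cnj (v $ j))"

lemma in_opsys: "a \<in> opsys R \<longleftrightarrow> (\<forall>i j. (i, j) \<notin> R \<longrightarrow> a $ i $ j = 0)"
proof
  assume "a \<in> opsys R" then show "\<forall>i j. (i, j) \<notin> R \<longrightarrow> a $ i $ j = 0"
    unfolding opsys_def Tmap_def by auto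
next
  assume "\<forall>i j. (i, j) \<notin> R \<longrightarrow> a $ i $ j = 0"
  then have "a = Tmap R a" unfolding Tmap_def by (simp add: vec_eq_iff)
  then show "a \<in> opsys R" unfolding opsys_def by blast
qed

lemma Tmap_id: "a \<in> opsys R \<Longrightarrow> Tmap R a = a"
  unfolding in_opsys Tmap_def by (simp add: vec_eq_iff)

lemma trace_ip: "mtrace (adjoint_mat \<rho> ** a) = ip \<rho> a"
  unfolding mtrace_def adjoint_mat_def matrix_matrix_mult_def ip_def
  by (subst sum.swap) simp

lemma inner_ip: "inner x y = Re (ip x y)"
  unfolding ip_def inner_vec_def inner_complex_def by (simp add: Re_sum)

lemma ip_outer: "ip x (outer v) = sq (adjoint_mat x) v v"
  unfolding ip_def sq_def outer_def adjoint_mat_def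
  by (subst sum.swap) (simp add: mult_ac)

lemma hermitian_adj: "hermitian x \<longleftrightarrow> adjoint_mat x = x"
proof
  assume h: "hermitian x"
  show "adjoint_mat x = x" unfolding vec_eq_iff adjoint_mat_def
  proof (intro allI)
    fix i j
    have "x $ j $ i = cnj (x $ i $ j)" using h unfolding hermitian_def by blast
    then show "(\<chi> i j. cnj (x $ j $ i)) $ i $ j = x $ i $ j" by simp
  qed
next
  assume a: "adjoint_mat x = x"
  show "hermitian x" unfolding hermitian_def
  proof (intro allI)
    fix i j
    have "x $ j $ i = adjoint_mat x $ j $ i" using a by simp
    then show "x $ j $ i = cnj (x $ i $ j)" by (simp add: adjoint_mat_def)
  qed
qed

lemma herm_sq_real: assumes "hermitian h" shows "sq h v v \<in> \<real>"
proof -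
  have H: "\<And>i j. cnj (h $ i $ j) = h $ j $ i" using assms unfolding hermitian_def by metis
  have "cnj (sq h v v) = (\<Sum>i\<in>UNIV. \<Sum>j\<in>UNIV. v $ i * h $ j $ i * cnj (v $ j))"
    unfolding sq_def by (simp add: cnj_sum H)
  also have "\<dots> = sq h v v" unfolding sq_def by (subst sum.swap) (simp add: mult_ac)
  finally show ?thesis by (simp add: Reals_cnj_iff)
qed

lemma inner_adj: "inner x (adjoint_mat m) = inner (adjoint_mat x) m"
  unfolding inner_ip ip_def adjoint_mat_def
  by (subst sum.swap) (simp add: Re_sum)

lemma ip_add2: "ip x (a + b) = ip x a + ip x b"
  unfolding ip_def by (simp add: algebra_simps sum.distrib)
lemma ip_scale2: "ip x (\<chi> i j. c * a $ i $ j) = c * ip x a"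
  unfolding ip_def by (simp add: algebra_simps sum_distrib_left)

lemma inner_Tmap: "inner x (Tmap R m) = inner (Tmap R x) m"
  unfolding inner_vec_def Tmap_def by (auto intro!: sum.cong)

definition herm :: "complex^'n^'n \<Rightarrow> complex^'n^'n" where
  "herm m = (1/2) *\<^sub>R (m + adjoint_mat m)"

lemma herm_inner: assumes "hermitian x" shows "inner x (herm m) = inner x m"
  using assms unfolding herm_def hermitian_adj
  by (simp add: inner_add_right inner_adj)

lemma herm_hermitian: "hermitian (herm m)"
  unfolding hermitian_def herm_def adjoint_mat_def by (simp add: add.commute)

lemma outer_hermitian: "hermitian (outer v)"
  unfolding hermitian_def outer_def by simp

lemma outer_psd: "psd (outer v)"
  unfolding psd_sq
proof
  fix x
  define w where "w = (\<Sum>i\<in>UNIV. cnj (x $ i) * v $ i)"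
  have e: "sq (outer v) x x = w * cnj w"
    unfolding w_def sq_def outer_def cnj_sum sum_product by (simp add: mult_ac)
  show "sq (outer v) x x \<in> \<real> \<and> 0 \<le> Re (sq (outer v) x x)"
    unfolding e complex_mult_cnj by (simp del: of_real_add of_real_power)
qed



lemma psd_entry_bound: assumes "psd b" shows "cmod (b $ i $ j) \<le> (Re (b $ i $ i) + Re (b $ j $ j)) / 2"
proof (cases "i = j")
  case True
  have "b $ i $ i \<in> \<real>" "Re (b $ i $ i) \<ge> 0" using psd_diag[OF assms] by auto
  then have "cmod (b $ i $ i) = Re (b $ i $ i)" by (simp add: cmod_eq_Re complex_is_Real_iff)
  then show ?thesis using True by simp
next
  case False
  show ?thesis
  proof (cases "b $ i $ j = 0")
    case True
    then show ?thesis using psd_diag[OF assms, of i] psd_diag[OF assms, of j] by simp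
  next
    case nz: False
    define z where "z = b $ i $ j"
    have H: "b $ j $ i = cnj z" using psd_herm[OF assms] unfolding hermitian_def z_def by blast
    define t where "t = - cnj z / complex_of_real (cmod z)"
    have zn: "cmod z \<noteq> 0" using nz z_def by simp
    have zc: "z * cnj z = complex_of_real (cmod z * cmod z)"
      using complex_norm_square[of z] by (simp add: power2_eq_square)
    have "z * t = - (z * cnj z) / complex_of_real (cmod z)" unfolding t_def by simp
    also have "\<dots> = - complex_of_real (cmod z * cmod z / cmod z)" unfolding zc of_real_divide by simp
    also have "\<dots> = - complex_of_real (cmod z)" using zn by simp
    finally have zt: "z * t = - complex_of_real (cmod z)" .
    have "cnj t * t = (z * cnj z) / (complex_of_real (cmod z) * complex_of_real (cmod z))" unfolding t_def by simp
    also have "\<dots> = complex_of_real (cmod z * cmod z / (cmod z * cmod z))" unfolding zc of_real_divide of_real_mult ..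
    also have "\<dots> = 1" using zn by simp
    finally have tt: "cnj t * t = 1" .
    have "sq b (axis i 1 + axis j t) (axis i 1 + axis j t) = b$i$i + z * t + cnj (z * t) + (cnj t * t) * b$j$j"
      unfolding qf2 H z_def by (simp add: mult_ac)
    also have "\<dots> = b$i$i + b$j$j - 2 * complex_of_real (cmod z)" unfolding zt tt by simp
    finally have "Re (b$i$i) + Re (b$j$j) - 2 * cmod z \<ge> 0"
      using assms[unfolded psd_sq, rule_format, of "axis i 1 + axis j t"] by simp
    then show ?thesis unfolding z_def by simp
  qed
qed

lemma sq_add_mat: "sq (b + c) x y = sq b x y + sq c x y"
  unfolding sq_def by (simp add: algebra_simps sum.distrib)
lemma scaleR_comp: "(r *\<^sub>R b) $ i $ j = complex_of_real r * (b $ i $ j :: complex)"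
proof -
  have "(r *\<^sub>R b) $ i $ j = r *\<^sub>R (b $ i $ j)" by simp
  then show ?thesis by (simp add: scaleR_conv_of_real)
qed
lemma sq_scaleR: "sq (r *\<^sub>R b) x y = complex_of_real r * sq b x y"
  unfolding sq_def scaleR_comp by (simp add: sum_distrib_left mult_ac)

lemma psd_add: "psd b \<Longrightarrow> psd c \<Longrightarrow> psd (b + c)"
  unfolding psd_sq sq_add_mat by auto
lemma psd_scaleR: "r \<ge> 0 \<Longrightarrow> psd b \<Longrightarrow> psd (r *\<^sub>R b)"
  unfolding psd_sq sq_scaleR by auto

lemma mtrace_add: "mtrace (a + b) = mtrace a + mtrace b"
  unfolding mtrace_def by (simp add: sum.distrib)
lemma mtrace_scaleR: "mtrace (r *\<^sub>R a) = complex_of_real r * mtrace a"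
  unfolding mtrace_def scaleR_comp by (simp add: sum_distrib_left)

lemma norm_mat_le: "norm (b::complex^'n^'n) \<le> (\<Sum>i\<in>UNIV. \<Sum>j\<in>UNIV. cmod (b $ i $ j))"
proof -
  have "norm b \<le> (\<Sum>i\<in>UNIV. norm (b $ i))" unfolding norm_vec_def by (rule L2_set_le_sum) simp
  also have "\<dots> \<le> (\<Sum>i\<in>UNIV. \<Sum>j\<in>UNIV. cmod (b $ i $ j))"
  proof (rule sum_mono)
    fix i show "norm (b $ i) \<le> (\<Sum>j\<in>UNIV. cmod (b $ i $ j))"
      unfolding norm_vec_def by (rule L2_set_le_sum) simp
  qed
  finally show ?thesis .
qed

definition P1 :: "(complex^'n^'n) set" where "P1 = {b. psd b \<and> mtrace b = 1}"

lemma P1_bounded: "bounded (P1 :: (complex^'n^'n) set)"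
  unfolding bounded_iff
proof (intro exI ballI)
  fix b :: "complex^'n^'n" assume "b \<in> P1"
  then have pb: "psd b" and tb: "mtrace b = 1" unfolding P1_def by auto
  have d: "\<And>k. Re (b $ k $ k) \<le> 1"
  proof -
    fix k
    have "Re (b $ k $ k) \<le> (\<Sum>i\<in>UNIV. Re (b $ i $ i))"
      by (rule member_le_sum) (use psd_diag[OF pb] in auto)
    also have "\<dots> = 1" using tb unfolding mtrace_def by (metis Re_sum one_complex.sel(1))
    finally show "Re (b $ k $ k) \<le> 1" .
  qed
  have e: "\<And>i j. cmod (b $ i $ j) \<le> 1"
  proof -
    fix i j
    show "cmod (b $ i $ j) \<le> 1" using psd_entry_bound[OF pb, of i j] d[of i] d[of j] by (simp add: field_simps)
  qed
  have "norm b \<le> (\<Sum>i\<in>(UNIV::'n set). \<Sum>j\<in>(UNIV::'n set). 1)"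
    using norm_mat_le[of b] e by (meson order_trans sum_mono)
  then show "norm b \<le> real (CARD('n) * CARD('n))" by simp
qed

lemma sq_continuous: "continuous_on UNIV (\<lambda>b. sq b x x)"
  unfolding sq_def
  by (rule continuous_on_sum, rule continuous_on_sum, rule continuous_on_mult_right, rule continuous_on_mult_left,
      rule continuous_on_component, rule continuous_on_component, rule continuous_on_id)



lemma P1_closed: "closed (P1 :: (complex^'n^'n) set)"
proof -
  have eq: "P1 = {b::complex^'n^'n. \<forall>x. Im (sq b x x) = 0} \<inter> {b. \<forall>x. Re (sq b x x) \<ge> 0} \<inter> {b. mtrace b = 1}"
    unfolding P1_def psd_sq complex_is_Real_iff by blast
  have c1: "closed {b::complex^'n^'n. \<forall>x. Im (sq b x x) = 0}"
    by (rule closed_Collect_all, rule closed_Collect_eq, rule continuous_on_Im, rule sq_continuous, rule continuous_on_const)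
  have c2: "closed {b::complex^'n^'n. \<forall>x. Re (sq b x x) \<ge> 0}"
    by (rule closed_Collect_all, rule closed_Collect_le, rule continuous_on_const, rule continuous_on_Re, rule sq_continuous)
  have c3: "closed {b::complex^'n^'n. mtrace b = 1}"
  proof -
    have "continuous_on UNIV (\<lambda>b::complex^'n^'n. mtrace b)" unfolding mtrace_def by (rule continuous_on_sum, rule continuous_on_component, rule continuous_on_component, rule continuous_on_id)
    then show ?thesis by (rule closed_Collect_eq) (rule continuous_on_const)
  qed
  show ?thesis unfolding eq by (intro closed_Int c1 c2 c3)
qed

lemma P1_convex: "convex (P1 :: (complex^'n^'n) set)"
  unfolding convex_def P1_def
proof (intro ballI allI impI, simp only: mem_Collect_eq, elim conjE)
  fix x y :: "complex^'n^'n" and u v :: real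
  assume "psd x" "mtrace x = 1" "psd y" "mtrace y = 1" "0 \<le> u" "0 \<le> v" "u + v = 1"
  then show "psd (u *\<^sub>R x + v *\<^sub>R y) \<and> mtrace (u *\<^sub>R x + v *\<^sub>R y) = 1"
    by (simp add: psd_add psd_scaleR mtrace_add mtrace_scaleR of_real_add[symmetric] del: of_real_add)
qed

lemma Tmap_linear: "linear (Tmap R)"
  by (rule linearI) (simp_all add: Tmap_def vec_eq_iff)



lemma tol_refl: "tolerance R \<Longrightarrow> (i, i) \<in> R"
  unfolding tolerance_def by (auto dest: refl_onD)
lemma tol_sym: "tolerance R \<Longrightarrow> (i, j) \<in> R \<Longrightarrow> (j, i) \<in> R"
  unfolding tolerance_def by (auto dest: symD)

lemma mat1_comp: "(mat 1 :: complex^'n^'n) $ i $ j = (if i = j then 1 else 0)"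
  by (simp add: mat_def)

lemma ip_mat1: "ip (mat 1) (x::complex^'n^'n) = mtrace x"
proof -
  have "\<And>i. (\<Sum>j\<in>UNIV. cnj ((mat 1 :: complex^'n^'n) $ i $ j) * x $ i $ j) = x $ i $ i"
  proof -
    fix i
    have "\<And>j. cnj ((mat 1 :: complex^'n^'n) $ i $ j) * x $ i $ j = (if j = i then x $ i $ i else 0)"
      by (simp add: mat1_comp)
    then show "(\<Sum>j\<in>UNIV. cnj ((mat 1 :: complex^'n^'n) $ i $ j) * x $ i $ j) = x $ i $ i" by simp
  qed
  then show ?thesis unfolding ip_def mtrace_def by simp
qed

lemma mtrace_Tmap: "tolerance R \<Longrightarrow> mtrace (Tmap R b) = mtrace b"
  unfolding mtrace_def Tmap_def by (simp add: tol_refl)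

lemma Tmap_scaleR: "Tmap R (r *\<^sub>R b) = r *\<^sub>R Tmap R b"
  unfolding Tmap_def by (simp add: vec_eq_iff)

lemma Tmap_zero: "Tmap R 0 = 0"
  unfolding Tmap_def by (simp add: vec_eq_iff)

lemma outer_zero: "outer 0 = 0"
  unfolding outer_def by (simp add: vec_eq_iff)

lemma mtrace_outer: "mtrace (outer v) = complex_of_real (\<Sum>i\<in>UNIV. (Re (v $ i))^2 + (Im (v $ i))^2)"
  unfolding mtrace_def outer_def by (simp add: complex_mult_cnj)

lemma rpos_of_dual:
  assumes tol: "tolerance R" and rA: "\<rho> \<in> opsys R" and hr: "hermitian \<rho>" and tr: "mtrace \<rho> = 1"
    and dual: "\<forall>h\<in>opsys R. psd h \<longrightarrow> Re (ip \<rho> h) \<ge> 0"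
  shows "Rpos R \<rho>"
proof (rule ccontr)
  assume nr: "\<not> Rpos R \<rho>"
  define C where "C = Tmap R ` P1"
  have cvx: "convex C" unfolding C_def by (rule convex_linear_image[OF Tmap_linear P1_convex])
  have "compact (P1 :: (complex^'n^'n) set)" using P1_bounded P1_closed compact_eq_bounded_closed by blast
  moreover have "continuous_on P1 (Tmap R)"
    using Tmap_linear[of R] by (intro linear_continuous_on) (simp add: linear_conv_bounded_linear)
  ultimately have cpt: "compact C" unfolding C_def by (intro compact_continuous_image)
  have nC: "\<rho> \<notin> C"
  proof
    assume "\<rho> \<in> C"
    then obtain b where "b \<in> P1" "\<rho> = Tmap R b" unfolding C_def by blast
    then have "Rpos R \<rho>" unfolding Rpos_def P1_def by blast
    then show False using nr by simp
  qed
  obtain w \<beta> where w1: "inner w \<rho> < \<beta>" and w2: "\<forall>x\<in>C. \<beta> < inner w x"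
    using separating_hyperplane_closed_point[OF cvx compact_imp_closed[OF cpt] nC] by blast
  define w' where "w' = w - \<beta> *\<^sub>R mat 1"
  have key: "\<And>x. inner w' x = inner w x - \<beta> * Re (mtrace x)"
    unfolding w'_def by (simp add: inner_diff_left inner_ip[of "mat 1"] ip_mat1)
  have pos: "inner w' (Tmap R (outer v)) \<ge> 0" for v
  proof (cases "v = 0")
    case True
    then show ?thesis by (simp add: outer_zero Tmap_zero)
  next
    case False
    then obtain k where k: "v $ k \<noteq> 0" by (metis vec_eq_iff zero_index)
    define s where "s = (\<Sum>i\<in>UNIV. (Re (v $ i))^2 + (Im (v $ i))^2)"
    have "0 < s" unfolding s_def
    proof (rule sum_pos2[of UNIV k])
      show "0 < (Re (v $ k))\<^sup>2 + (Im (v $ k))\<^sup>2" using k by (simp add: complex_eq_iff add_pos_nonneg sum_power2_gt_zero_iff)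
    qed auto
    have ms: "mtrace (outer v) = complex_of_real s" unfolding s_def by (rule mtrace_outer)
    define b where "b = (1 / s) *\<^sub>R outer v"
    have "b \<in> P1" unfolding P1_def b_def
      using \<open>0 < s\<close> by (simp add: psd_scaleR outer_psd mtrace_scaleR ms of_real_mult[symmetric] del: of_real_mult)
    then have bb: "\<beta> < inner w (Tmap R b)" using w2 unfolding C_def by blast
    have tb: "mtrace (Tmap R b) = 1" using \<open>b \<in> P1\<close> mtrace_Tmap[OF tol] unfolding P1_def by simp
    have "Tmap R (outer v) = s *\<^sub>R Tmap R b" unfolding b_def Tmap_scaleR using \<open>0 < s\<close> by simp
    then have "inner w' (Tmap R (outer v)) = s * (inner w (Tmap R b) - \<beta>)"
      using key tb by simp
    then show ?thesis using bb \<open>0 < s\<close> by simp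
  qed
  define h where "h = herm (Tmap R w')"
  have hA: "h \<in> opsys R" unfolding in_opsys
  proof (intro allI impI)
    fix i j assume "(i, j) \<notin> R"
    moreover then have "(j, i) \<notin> R" using tol_sym[OF tol] by blast
    ultimately show "h $ i $ j = 0" unfolding h_def herm_def adjoint_mat_def Tmap_def by simp
  qed
  have hpsd: "psd h" unfolding psd_sq
  proof
    fix x
    have hh: "hermitian h" unfolding h_def by (rule herm_hermitian)
    have "Re (sq h x x) = Re (sq (adjoint_mat h) x x)" using hh hermitian_adj by metis
    also have "\<dots> = inner h (outer x)" by (simp add: inner_ip ip_outer)
    also have "\<dots> = inner (outer x) (Tmap R w')" unfolding h_def inner_commute[of "herm _"] herm_inner[OF outer_hermitian] ..
    also have "\<dots> = inner w' (Tmap R (outer x))" using inner_Tmap[of "outer x" R w'] inner_commute by metis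
    finally show "sq h x x \<in> \<real> \<and> 0 \<le> Re (sq h x x)" using pos[of x] herm_sq_real[OF hh] by simp
  qed
  have "Re (ip \<rho> h) = inner \<rho> h" by (simp add: inner_ip)
  also have "\<dots> = inner \<rho> (Tmap R w')" unfolding h_def by (rule herm_inner[OF hr])
  also have "\<dots> = inner w' \<rho>" using inner_Tmap[of \<rho> R w'] Tmap_id[OF rA] inner_commute by metis
  also have "\<dots> = inner w \<rho> - \<beta>" using key tr by simp
  finally have "Re (ip \<rho> h) < 0" using w1 by simp
  then show False using dual hA hpsd by fastforce
qed



definition Emat :: "'n \<Rightarrow> 'n \<Rightarrow> complex^'n^'n" where
  "Emat i j = (\<chi> k l. if k = i \<and> l = j then 1 else 0)"

definition gmap :: "('n \<times> 'n) set \<Rightarrow> (complex^'n^'n \<Rightarrow> complex) \<Rightarrow> complex^'n^'n" where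
  "gmap R \<phi> = (\<chi> i j. if (i, j) \<in> R then cnj (\<phi> (Emat i j)) else 0)"

lemma add_in: "a \<in> opsys R \<Longrightarrow> b \<in> opsys R \<Longrightarrow> a + b \<in> opsys R"
  unfolding in_opsys by simp
lemma diff_in: "a \<in> opsys R \<Longrightarrow> b \<in> opsys R \<Longrightarrow> a - b \<in> opsys R"
  unfolding in_opsys by simp
lemma scale_in: "a \<in> opsys R \<Longrightarrow> (\<chi> i j. c * a $ i $ j) \<in> opsys R"
  unfolding in_opsys by simp
lemma zero_in: "0 \<in> opsys R"
  unfolding in_opsys by simp
lemma Emat_in: "(i, j) \<in> R \<Longrightarrow> Emat i j \<in> opsys R"
  unfolding in_opsys Emat_def by auto
lemma mat1_in: "tolerance R \<Longrightarrow> mat 1 \<in> opsys R"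
  unfolding in_opsys by (auto simp: mat1_comp tol_refl)
lemma sum_in: "finite F \<Longrightarrow> (\<forall>p\<in>F. f p \<in> opsys R) \<Longrightarrow> sum f F \<in> opsys R"
  unfolding in_opsys by simp

lemma ip_Emat: "ip \<rho> (Emat i j) = cnj (\<rho> $ i $ j)"
proof -
  have "\<And>k. (\<Sum>l\<in>UNIV. cnj (\<rho> $ k $ l) * Emat i j $ k $ l) = (if k = i then cnj (\<rho> $ i $ j) else 0)"
  proof -
    fix k
    have "\<And>l. cnj (\<rho> $ k $ l) * Emat i j $ k $ l = (if l = j then (if k = i then cnj (\<rho> $ i $ j) else 0) else 0)"
      by (simp add: Emat_def)
    then show "(\<Sum>l\<in>UNIV. cnj (\<rho> $ k $ l) * Emat i j $ k $ l) = (if k = i then cnj (\<rho> $ i $ j) else 0)" by simp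
  qed
  then show ?thesis unfolding ip_def by simp
qed

lemma ip_mat1_right: "ip (x::complex^'n^'n) (mat 1) = cnj (mtrace x)"
proof -
  have "\<And>i. (\<Sum>j\<in>UNIV. cnj (x $ i $ j) * (mat 1 :: complex^'n^'n) $ i $ j) = cnj (x $ i $ i)"
  proof -
    fix i
    have "\<And>j. cnj (x $ i $ j) * (mat 1 :: complex^'n^'n) $ i $ j = (if j = i then cnj (x $ i $ i) else 0)"
      by (simp add: mat1_comp)
    then show "(\<Sum>j\<in>UNIV. cnj (x $ i $ j) * (mat 1 :: complex^'n^'n) $ i $ j) = cnj (x $ i $ i)" by simp
  qed
  then show ?thesis unfolding ip_def mtrace_def by (simp add: cnj_sum)
qed

lemma ip_Tmap: "a \<in> opsys R \<Longrightarrow> ip (Tmap R b) a = ip b a"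
  unfolding in_opsys ip_def Tmap_def by (auto intro!: sum.cong)

lemma ip_diff1: "ip (x - y) a = ip x a - ip y a"
  unfolding ip_def by (simp add: algebra_simps sum_subtractf)

lemma state_of_in:
  assumes tol: "tolerance R" and r: "\<rho> \<in> density_set R"
  shows "state_of R \<rho> \<in> states R"
proof -
  from r obtain b where rA: "\<rho> \<in> opsys R" and pb: "psd b" and rb: "\<rho> = Tmap R b" and tr: "mtrace \<rho> = 1"
    unfolding density_set_def Rpos_def by blast
  have so: "\<And>a. a \<in> opsys R \<Longrightarrow> state_of R \<rho> a = ip \<rho> a" unfolding state_of_def by (simp add: trace_ip)
  show ?thesis unfolding states_def
  proof (intro CollectI conjI ballI allI impI)
    fix a b assume "a \<in> opsys R" "b \<in> opsys R"
    then show "state_of R \<rho> (a + b) = state_of R \<rho> a + state_of R \<rho> b" by (simp add: so add_in ip_add2)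
  next
    fix c a assume "a \<in> opsys R"
    then show "state_of R \<rho> (\<chi> i j. c * a $ i $ j) = c * state_of R \<rho> a" by (simp add: so scale_in ip_scale2)
  next
    fix a assume "a \<in> opsys R" "psd a"
    then have "state_of R \<rho> a = ip \<rho> a" using so by blast
    also have "\<dots> = ip b a" unfolding rb using \<open>a \<in> opsys R\<close> by (rule ip_Tmap)
    finally have "state_of R \<rho> a = ip b a" .
    then show "state_of R \<rho> a \<in> \<real>" "0 \<le> Re (state_of R \<rho> a)" using psd_ip[OF \<open>psd a\<close> pb] by auto
  next
    show "state_of R \<rho> (mat 1) = 1" using so[OF mat1_in[OF tol]] by (simp add: ip_mat1_right tr)
  next
    fix a assume "a \<notin> opsys R" then show "state_of R \<rho> a = 0" unfolding state_of_def by simp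
  qed
qed

lemma state_of_inj:
  assumes "\<rho> \<in> opsys R" "\<sigma> \<in> opsys R" "state_of R \<rho> = state_of R \<sigma>"
  shows "\<rho> = \<sigma>"
proof -
  define d where "d = \<rho> - \<sigma>"
  have dA: "d \<in> opsys R" unfolding d_def using assms diff_in by blast
  have "state_of R \<rho> d = state_of R \<sigma> d" using assms by simp
  then have "ip \<rho> d = ip \<sigma> d" using dA unfolding state_of_def by (simp add: trace_ip)
  then have "ip d d = 0" unfolding d_def ip_diff1 by simp
  then have "inner d d = 0" by (simp add: inner_ip)
  then show ?thesis unfolding d_def by simp
qed

lemma gmap_state_of: assumes "\<rho> \<in> opsys R" shows "gmap R (state_of R \<rho>) = \<rho>"
  unfolding vec_eq_iff
proof (intro allI)
  fix i j
  show "gmap R (state_of R \<rho>) $ i $ j = \<rho> $ i $ j"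
  proof (cases "(i, j) \<in> R")
    case True
    then have "state_of R \<rho> (Emat i j) = ip \<rho> (Emat i j)" unfolding state_of_def by (simp add: Emat_in trace_ip)
    then show ?thesis using True unfolding gmap_def by (simp add: ip_Emat)
  next
    case False
    then show ?thesis using assms unfolding gmap_def in_opsys by simp
  qed
qed



lemma states_D:
  assumes "\<phi> \<in> states R"
  shows "\<And>a b. a \<in> opsys R \<Longrightarrow> b \<in> opsys R \<Longrightarrow> \<phi> (a + b) = \<phi> a + \<phi> b"
    and "\<And>c a. a \<in> opsys R \<Longrightarrow> \<phi> (\<chi> i j. c * a $ i $ j) = c * \<phi> a"
    and "\<And>a. a \<in> opsys R \<Longrightarrow> psd a \<Longrightarrow> \<phi> a \<in> \<real> \<and> Re (\<phi> a) \<ge> 0"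
    and "\<phi> (mat 1) = 1"
    and "\<And>a. a \<notin> opsys R \<Longrightarrow> \<phi> a = 0"
  using assms unfolding states_def by blast+

lemma states_zero: assumes "\<phi> \<in> states R" shows "\<phi> 0 = 0"
proof -
  have "\<phi> (\<chi> i j. 0 * (0::complex^'a^'a) $ i $ j) = 0 * \<phi> 0" by (rule states_D(2)[OF assms zero_in])
  moreover have "(\<chi> i j. 0 * (0::complex^'a^'a) $ i $ j) = 0" by (simp add: vec_eq_iff)
  ultimately show ?thesis by simp
qed

lemma states_sum:
  assumes "\<phi> \<in> states R" "finite F"
  shows "(\<forall>p\<in>F. f p \<in> opsys R) \<longrightarrow> \<phi> (sum f F) = (\<Sum>p\<in>F. \<phi> (f p))"
  using assms(2)
proof (induction F rule: finite_induct)
  case empty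
  then show ?case using states_zero[OF assms(1)] by simp
next
  case (insert x F)
  show ?case
  proof
    assume a: "\<forall>p\<in>insert x F. f p \<in> opsys R"
    have "\<phi> (sum f (insert x F)) = \<phi> (f x + sum f F)" using insert.hyps by simp
    also have "\<dots> = \<phi> (f x) + \<phi> (sum f F)"
      by (rule states_D(1)[OF assms(1)]) (use a sum_in[OF insert.hyps(1)] in auto)
    also have "\<dots> = (\<Sum>p\<in>insert x F. \<phi> (f p))" using insert a by simp
    finally show "\<phi> (sum f (insert x F)) = (\<Sum>p\<in>insert x F. \<phi> (f p))" .
  qed
qed

lemma states_repr:
  assumes ph: "\<phi> \<in> states R" and aA: "a \<in> opsys R"
  shows "\<phi> a = ip (gmap R \<phi>) a"
proof -
  define t where "t p = (\<chi> k l. a $ fst p $ snd p * Emat (fst p) (snd p) $ k $ l)" for p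
  have tA: "\<forall>p\<in>UNIV. t p \<in> opsys R"
    using aA unfolding in_opsys t_def Emat_def by auto
  have asum: "a = sum t UNIV"
    unfolding vec_eq_iff
  proof (intro allI)
    fix k l
    have "\<And>p. t p $ k $ l = (if p = (k, l) then a $ k $ l else 0)" unfolding t_def Emat_def by auto
    then show "a $ k $ l = sum t UNIV $ k $ l" by simp
  qed
  have tp: "\<phi> (t p) = cnj (gmap R \<phi> $ fst p $ snd p) * a $ fst p $ snd p" for p
  proof (cases "p \<in> R")
    case True
    have "\<phi> (t p) = a $ fst p $ snd p * \<phi> (Emat (fst p) (snd p))"
      unfolding t_def by (rule states_D(2)[OF ph Emat_in]) (use True in simp)
    then show ?thesis using True unfolding gmap_def by (simp add: mult.commute)
  next
    case False
    then have "a $ fst p $ snd p = 0" using aA unfolding in_opsys by (cases p) auto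
    then have "t p = 0" unfolding t_def by (simp add: vec_eq_iff)
    then show ?thesis using states_zero[OF ph] \<open>a $ fst p $ snd p = 0\<close> by simp
  qed
  have "\<phi> a = (\<Sum>p\<in>UNIV. \<phi> (t p))" using states_sum[OF ph, of UNIV t] tA asum by simp
  also have "\<dots> = (\<Sum>p\<in>UNIV. cnj (gmap R \<phi> $ fst p $ snd p) * a $ fst p $ snd p)" using tp by simp
  also have "\<dots> = ip (gmap R \<phi>) a"
    unfolding ip_def UNIV_Times_UNIV[symmetric] sum.cartesian_product by (simp add: case_prod_beta)
  finally show ?thesis .
qed

lemma outer_in:
  assumes tol: "tolerance R" and ij: "(i, j) \<in> R" and v: "\<And>k. v $ k \<noteq> 0 \<Longrightarrow> k = i \<or> k = j"
  shows "outer v \<in> opsys R"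
  unfolding in_opsys
proof (intro allI impI)
  fix k l assume kl: "(k, l) \<notin> R"
  show "outer v $ k $ l = 0"
  proof (rule ccontr)
    assume "outer v $ k $ l \<noteq> 0"
    then have "v $ k \<noteq> 0" "v $ l \<noteq> 0" unfolding outer_def by auto
    then have "k = i \<or> k = j" "l = i \<or> l = j" using v by auto
    then show False using kl ij tol_refl[OF tol] tol_sym[OF tol] by auto
  qed
qed

lemma gmap_herm:
  assumes tol: "tolerance R" and ph: "\<phi> \<in> states R"
  shows "hermitian (gmap R \<phi>)"
  unfolding hermitian_def
proof (intro allI)
  fix i j
  define g where "g = gmap R \<phi>"
  show "gmap R \<phi> $ j $ i = cnj (gmap R \<phi> $ i $ j)"
  proof (cases "(i, j) \<in> R")
    case False
    then have "(j, i) \<notin> R" using tol_sym[OF tol] by blast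
    then show ?thesis using False unfolding gmap_def by simp
  next
    case True
    have real: "sq (adjoint_mat g) v v \<in> \<real>" if "\<And>k. v $ k \<noteq> 0 \<Longrightarrow> k = i \<or> k = j" for v
    proof -
      have oA: "outer v \<in> opsys R" by (rule outer_in[OF tol True that])
      have "sq (adjoint_mat g) v v = ip g (outer v)" by (simp add: ip_outer)
      also have "\<dots> = \<phi> (outer v)" unfolding g_def by (rule states_repr[OF ph oA, symmetric])
      finally show ?thesis using states_D(3)[OF ph oA outer_psd] by simp
    qed
    have "adjoint_mat g $ j $ i = cnj (adjoint_mat g $ i $ j)"
    proof (rule herm2)
      show "sq (adjoint_mat g) (axis i s + axis j t) (axis i s + axis j t) \<in> \<real>" for s t
        by (rule real) (auto simp: axis_def split: if_splits)
      show "sq (adjoint_mat g) (axis i s) (axis i s) \<in> \<real>" for s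
        by (rule real) (auto simp: axis_def split: if_splits)
      show "sq (adjoint_mat g) (axis j s) (axis j s) \<in> \<real>" for s
        by (rule real) (auto simp: axis_def split: if_splits)
    qed
    then show ?thesis unfolding g_def adjoint_mat_def by simp
  qed
qed

lemma gmap_density:
  assumes tol: "tolerance R" and ph: "\<phi> \<in> states R"
  shows "gmap R \<phi> \<in> density_set R" and "state_of R (gmap R \<phi>) = \<phi>"
proof -
  define g where "g = gmap R \<phi>"
  have gA: "g \<in> opsys R" unfolding g_def gmap_def in_opsys by simp
  have "cnj (mtrace g) = 1"
    using states_repr[OF ph mat1_in[OF tol]] states_D(4)[OF ph] unfolding g_def by (simp add: ip_mat1_right)
  then have tr: "mtrace g = 1" by (metis complex_cnj_cnj complex_cnj_one)
  have "Rpos R g"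
  proof (rule rpos_of_dual[OF tol gA _ tr])
    show "hermitian g" unfolding g_def by (rule gmap_herm[OF tol ph])
    show "\<forall>h\<in>opsys R. psd h \<longrightarrow> 0 \<le> Re (ip g h)"
      using states_repr[OF ph] states_D(3)[OF ph] unfolding g_def by simp
  qed
  then show "gmap R \<phi> \<in> density_set R" using gA tr unfolding density_set_def g_def by simp
  show "state_of R (gmap R \<phi>) = \<phi>"
  proof
    fix a
    show "state_of R (gmap R \<phi>) a = \<phi> a"
      by (cases "a \<in> opsys R") (simp_all add: state_of_def trace_ip states_repr[OF ph] states_D(5)[OF ph])
  qed
qed



lemma ip_cont: "continuous_on S (\<lambda>\<rho>::complex^'n^'n. ip \<rho> a)"
  unfolding ip_def
  by (rule continuous_on_sum, rule continuous_on_sum, rule continuous_on_mult_right, rule continuous_on_cnj,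
      rule continuous_on_component, rule continuous_on_component, rule continuous_on_id)

lemma state_of_cont: "continuous_on S (state_of R)"
proof (rule continuous_on_coordinatewise_then_product)
  fix a
  show "continuous_on S (\<lambda>\<rho>. state_of R \<rho> a)"
  proof (cases "a \<in> opsys R")
    case True
    then have eq: "(\<lambda>\<rho>. state_of R \<rho> a) = (\<lambda>\<rho>. ip \<rho> a)" unfolding state_of_def by (simp add: trace_ip)
    show ?thesis unfolding eq by (rule ip_cont)
  next
    case False
    then have eq: "(\<lambda>\<rho>. state_of R \<rho> a) = (\<lambda>\<rho>. 0)" unfolding state_of_def by simp
    show ?thesis unfolding eq by (rule continuous_on_const)
  qed
qed

lemma gmap_cont: "continuous_on S (gmap R)"
  unfolding gmap_def
proof (rule continuous_on_vec_lambda, rule continuous_on_vec_lambda)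
  fix i j
  show "continuous_on S (\<lambda>\<phi>. if (i, j) \<in> R then cnj (\<phi> (Emat i j)) else 0)"
  proof (cases "(i, j) \<in> R")
    case True
    have "continuous_on S (\<lambda>\<phi>::complex^'a^'a \<Rightarrow> complex. \<phi> (Emat i j))"
      by (rule continuous_on_subset[OF continuous_on_product_coordinates]) simp
    then show ?thesis using True by (simp add: continuous_on_cnj)
  next
    case False
    then show ?thesis by simp
  qed
qed

theorem corollary4p8:
  fixes R :: "('n::finite \<times> 'n) set"
  assumes "tolerance R"
  shows "bij_betw (state_of R) (density_set R) (states R) \<and>
         homeomorphic_map (top_of_set (density_set R)) (top_of_set (states R)) (state_of R)"
proof
  have DA: "density_set R \<subseteq> opsys R" unfolding density_set_def by auto
  have img: "state_of R ` density_set R = states R"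
  proof
    show "state_of R ` density_set R \<subseteq> states R" using state_of_in[OF assms] by blast
    show "states R \<subseteq> state_of R ` density_set R"
    proof
      fix \<phi> assume ph: "\<phi> \<in> states R"
      then show "\<phi> \<in> state_of R ` density_set R" using gmap_density[OF assms ph] by (metis image_eqI)
    qed
  qed
  show "bij_betw (state_of R) (density_set R) (states R)"
    unfolding bij_betw_def
  proof
    show "inj_on (state_of R) (density_set R)"
      unfolding inj_on_def using DA state_of_inj by blast
  qed (rule img)
  show "homeomorphic_map (top_of_set (density_set R)) (top_of_set (states R)) (state_of R)"
    unfolding homeomorphic_map_maps
  proof (intro exI[of _ "gmap R"])
    show "homeomorphic_maps (top_of_set (density_set R)) (top_of_set (states R)) (state_of R) (gmap R)"
      unfolding homeomorphic_maps_def
    proof (intro conjI ballI)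
      show "continuous_map (top_of_set (density_set R)) (top_of_set (states R)) (state_of R)"
        unfolding continuous_map_in_subtopology using state_of_cont img by auto
      show "continuous_map (top_of_set (states R)) (top_of_set (density_set R)) (gmap R)"
        unfolding continuous_map_in_subtopology using gmap_cont gmap_density(1)[OF assms] by auto
      fix x assume "x \<in> topspace (top_of_set (density_set R))"
      then show "gmap R (state_of R x) = x" using gmap_state_of DA by auto
    next
      fix y assume "y \<in> topspace (top_of_set (states R))"
      then show "state_of R (gmap R y) = y" using gmap_density(2)[OF assms] by auto
    qed
  qed
qed

end
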